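(* Let $r\ge0$ be an integer, $\beta_1,\dots,\beta_r\in\mathbb C$, and let $|G_\psi\rangle=\hat S(\zeta_\psi)|\alpha_\psi\rangle$ be a single-mode Gaussian state which has coherent rank $k$ (i.e. is a superposition of $k$ coherent states). Consider the single-mode state (of stellar rank $r$) $$|\psi\rangle=\frac{1}{\sqrt{\mathcal N}}\left[\prod_{i=1}^r \hat D(\beta_i)\hat a^\dagger\hat D^\dagger(\beta_i)\right]|G_\psi\rangle,$$ with $\mathcal N$ the normalization constant. Then $|\psi\rangle$ has approximate coherent rank at most $k(r+1)$.
   Context: Single-mode Fock basis $\{|n\rangle\}$, annihilation operator $\hat a=\sum_{n\ge1}\sqrt n|n-1\rangle\langle n|$ and creation operator $\hat a^\dagger$. Displacement operator $\hat D(\alpha)=e^{\alpha\hat a^\dagger-\bar\alpha\hat a}$; coherent state $|\alpha\rangle=\hat D(\alpha)|0\rangle=e^{-|\alpha|^2/2}\sum_n\frac{\alpha^n}{\sqrt{n!}}|n\rangle$. Squeeze operator $\hat S(\zeta)=\exp[\tfrac12(\bar\zeta\hat a^2-\zeta\hat a^{\dagger2})]$, $\zeta\in\mathbb C$. A state has coherent rank $k$ if it can be written as a superposition $\sum_{i=1}^k c_i|\alpha_i\rangle$ of $k$ coherent states. The approximate coherent rank of $|\psi\rangle$ is the smallest integer $k$ such that for every $\delta>0$ there is a state $|\tilde\psi\rangle$ of coherent rank $k$ with $|\langle\psi|\tilde\psi\rangle|^2>1-\delta$. *)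

theory Defs
  imports Complex_Main
begin

text \<open>Single-mode Fock space: a vector is its sequence of Fock coefficients
  (component n = coefficient of the number state n).\<close>

type_synonym fvec = "nat \<Rightarrow> complex"

definition inner_f :: "fvec \<Rightarrow> fvec \<Rightarrow> complex" where
  "inner_f f g = (\<Sum>n. cnj (f n) * g n)"

definition sq_norm_f :: "fvec \<Rightarrow> real" where
  "sq_norm_f f = (\<Sum>n. (cmod (f n))^2)"

definition ann :: "fvec \<Rightarrow> fvec" where
  "ann \<psi> n = complex_of_real (sqrt (real (Suc n))) * \<psi> (Suc n)"

definition adag :: "fvec \<Rightarrow> fvec" where
  "adag \<psi> n = (case n of 0 \<Rightarrow> 0 | Suc m \<Rightarrow> complex_of_real (sqrt (real (Suc m))) * \<psi> m)"

definition op_exp :: "(fvec \<Rightarrow> fvec) \<Rightarrow> fvec \<Rightarrow> fvec" where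
  "op_exp X \<psi> = (\<lambda>n. \<Sum>m. (X ^^ m) \<psi> n / of_nat (fact m))"

definition displ_gen :: "complex \<Rightarrow> fvec \<Rightarrow> fvec" where
  "displ_gen b \<psi> = (\<lambda>n. b * adag \<psi> n - cnj b * ann \<psi> n)"

definition displ :: "complex \<Rightarrow> fvec \<Rightarrow> fvec" where
  "displ b = op_exp (displ_gen b)"

definition displ_adj :: "complex \<Rightarrow> fvec \<Rightarrow> fvec" where
  "displ_adj b = op_exp (\<lambda>\<psi> n. - displ_gen b \<psi> n)"

definition coh :: "complex \<Rightarrow> fvec" where
  "coh \<alpha> n = complex_of_real (exp (- ((cmod \<alpha>)^2) / 2)) * \<alpha> ^ n
              / complex_of_real (sqrt (fact n))"

text \<open>Squeeze operator S(z) = exp(1/2 (conj z a^2 - z a^dag^2)), z = r e^{i theta}, given in its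
  standard normal-ordered (disentangled) form
  S(z) = exp(-1/2 e^{i theta} tanh r a^dag^2) (cosh r)^{-(a^dag a + 1/2)} exp(1/2 e^{-i theta} tanh r a^2).\<close>

definition squeeze :: "complex \<Rightarrow> fvec \<Rightarrow> fvec" where
  "squeeze z \<psi> =
     (let r = cmod z;
          t = (if z = 0 then 0 else (z / complex_of_real r) * complex_of_real (tanh r));
          right = op_exp (\<lambda>\<phi> n. (cnj t / 2) * ann (ann \<phi>) n) \<psi>;
          mid = (\<lambda>n. complex_of_real ((cosh r) powr (- (real n + 1/2))) * right n)
      in op_exp (\<lambda>\<phi> n. - (t / 2) * adag (adag \<phi>) n) mid)"

definition coherent_rank_le :: "nat \<Rightarrow> fvec \<Rightarrow> bool" where
  "coherent_rank_le k \<psi> \<longleftrightarrow>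
     (\<exists>c \<alpha> :: nat \<Rightarrow> complex. \<psi> = (\<lambda>n. \<Sum>i<k. c i * coh (\<alpha> i) n))"

definition approx_coherent_rank_le :: "nat \<Rightarrow> fvec \<Rightarrow> bool" where
  "approx_coherent_rank_le m \<psi> \<longleftrightarrow>
     (\<forall>\<delta>>0. \<exists>\<phi>. coherent_rank_le m \<phi> \<and> sq_norm_f \<phi> = 1 \<and>
                   (cmod (inner_f \<psi> \<phi>))^2 > 1 - \<delta>)"

definition normalize_f :: "fvec \<Rightarrow> fvec" where
  "normalize_f v = (\<lambda>n. v n / complex_of_real (sqrt (sq_norm_f v)))"

definition dad :: "complex \<Rightarrow> fvec \<Rightarrow> fvec" where
  "dad b v = displ b (adag (displ_adj b v))"

end

theory Submission
  imports Defs "HOL-Complex_Analysis.Complex_Analysis" "HOL-Computational_Algebra.Polynomial_FPS"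
begin

unbundle no vec_syntax


definition Lop :: "complex \<Rightarrow> complex \<Rightarrow> complex fps \<Rightarrow> complex fps" where
  "Lop c1 c2 g = fps_const c1 * fps_X * g + fps_const c2 * fps_deriv g"

lemma Lop_nth: "Lop c1 c2 g $ n = c1 * (if n = 0 then 0 else g $ (n - 1)) + c2 * (of_nat (n+1) * g $ (n+1))"
  unfolding Lop_def by (simp add: mult.assoc)

lemma Lop_add: "Lop c1 c2 (f + g) = Lop c1 c2 f + Lop c1 c2 g"
  unfolding Lop_def by (simp add: algebra_simps)

lemma Lop_const: "Lop c1 c2 (fps_const a * f) = fps_const a * Lop c1 c2 f"
  unfolding Lop_def by (simp add: algebra_simps)

lemma Lopm_add: "(Lop c1 c2 ^^ m) (f + g) = (Lop c1 c2 ^^ m) f + (Lop c1 c2 ^^ m) g"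
  by (induction m) (simp_all add: Lop_add)

lemma Lopm_const: "(Lop c1 c2 ^^ m) (fps_const a * f) = fps_const a * (Lop c1 c2 ^^ m) f"
  by (induction m) (simp_all add: Lop_const)

lemma Lopm_zero: "(Lop c1 c2 ^^ m) 0 = 0"
  using Lopm_const[where a=0 and f=0] by simp

lemma Lopm_sum: "(Lop c1 c2 ^^ m) (\<Sum>i\<in>A. f i) = (\<Sum>i\<in>A. (Lop c1 c2 ^^ m) (f i))"
  by (induction A rule: infinite_finite_induct) (simp_all add: Lopm_zero Lopm_add)

lemma Lop_X: "Lop c1 c2 (fps_X * h) = fps_X * Lop c1 c2 h + fps_const c2 * h"
  unfolding Lop_def by (simp add: algebra_simps)

lemma Lopm_X: "(Lop c1 c2 ^^ m) (fps_X * g) = fps_X * (Lop c1 c2 ^^ m) g + fps_const (of_nat m * c2) * (Lop c1 c2 ^^ (m - 1)) g"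
proof (induction m)
  case 0 then show ?case by simp
next
  case (Suc m)
  have "(Lop c1 c2 ^^ Suc m) (fps_X * g) = Lop c1 c2 ((Lop c1 c2 ^^ m) (fps_X * g))" by simp
  also have "\<dots> = fps_X * (Lop c1 c2 ^^ Suc m) g + fps_const c2 * (Lop c1 c2 ^^ m) g
      + fps_const (of_nat m * c2) * Lop c1 c2 ((Lop c1 c2 ^^ (m - 1)) g)"
    by (simp add: Suc Lop_add Lop_const Lop_X)
  also have "fps_const (of_nat m * c2) * Lop c1 c2 ((Lop c1 c2 ^^ (m - 1)) g) = fps_const (of_nat m * c2) * (Lop c1 c2 ^^ m) g"
    by (cases m) simp_all
  finally show ?case by (simp add: algebra_simps fps_const_add[symmetric] del: fps_const_add)
qed

definition summL :: "complex \<Rightarrow> complex \<Rightarrow> complex fps \<Rightarrow> bool" where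
  "summL c1 c2 g \<longleftrightarrow> (\<forall>n. summable (\<lambda>m. (Lop c1 c2 ^^ m) g $ n / fact m))"

definition ExpL :: "complex \<Rightarrow> complex \<Rightarrow> complex fps \<Rightarrow> complex fps" where
  "ExpL c1 c2 g = Abs_fps (\<lambda>n. \<Sum>m. (Lop c1 c2 ^^ m) g $ n / fact m)"

lemma ExpL_nth: "ExpL c1 c2 g $ n = (\<Sum>m. (Lop c1 c2 ^^ m) g $ n / fact m)"
  unfolding ExpL_def by simp

lemma Lopm_deriv:
  assumes "\<And>s n. ((\<lambda>s. g s $ n) has_field_derivative g' s $ n) (at s)"
  shows "((\<lambda>s. (Lop c1 c2 ^^ m) (g s) $ n) has_field_derivative (Lop c1 c2 ^^ m) (g' s) $ n) (at s)"
  using assms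
proof (induction m arbitrary: g g' n s)
  case 0 then show ?case by simp
next
  case (Suc m)
  have d: "((\<lambda>s. Lop c1 c2 (g s) $ n) has_field_derivative Lop c1 c2 (g' s) $ n) (at s)" for s n
    unfolding Lop_nth using Suc.prems
    by (auto intro!: derivative_eq_intros)
  show ?case
    unfolding funpow_Suc_right comp_def
    by (rule Suc.IH[OF d])
qed

definition hfun :: "complex \<Rightarrow> complex \<Rightarrow> complex \<Rightarrow> complex \<Rightarrow> complex fps" where
  "hfun c1 c2 \<beta> s = fps_const (exp (s^2*c1*c2/2 + s*\<beta>*c2)) * fps_exp (\<beta> + s*c1)"

lemma hfun_nth: "hfun c1 c2 \<beta> s $ n = exp (s^2*c1*c2/2 + s*\<beta>*c2) * ((\<beta> + s*c1)^n / fact n)"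
  unfolding hfun_def by simp

lemma hfun_aux0:
  fixes F e p q x K K2 :: complex
  assumes "F \<noteq> 0" "K \<noteq> 0" "K2 \<noteq> 0"
  shows "e*(q*x)*(x^(Suc k)/(K*F)) + e*(K*x^k*p/(K*F))
     = p*(e*(x^k/F)) + q*(K2 * (e*(x^(Suc k + 1)/(K2*(K*F)))))"
  using assms by (simp add: field_simps power_Suc)

lemma hfun_aux:
  fixes F e p q x :: complex
  assumes "F \<noteq> 0"
  shows "e*(q*x)*(x^(Suc k)/(of_nat (Suc k)*F)) + e*(of_nat (Suc k)*x^k*p/(of_nat(Suc k)*F))
     = p*(e*(x^k/F)) + q*(of_nat(Suc k + 1) * (e*(x^(Suc k + 1)/(of_nat (Suc (Suc k))*(of_nat (Suc k)*F)))))"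
proof -
  have b: "(of_nat (Suc k + 1) :: complex) = of_nat (Suc (Suc k))" by simp
  have "(of_nat (Suc k) :: complex) \<noteq> 0" "(of_nat (Suc (Suc k)) :: complex) \<noteq> 0"
    by (simp_all only: of_nat_eq_0_iff)
  from hfun_aux0[OF assms this, where e=e and q=q and x=x and p=p and k=k] show ?thesis unfolding b .
qed

lemma hfun_deriv: "((\<lambda>s. hfun c1 c2 \<beta> s $ n) has_field_derivative Lop c1 c2 (hfun c1 c2 \<beta> s) $ n) (at s)"
proof -
  define e where "e = exp (s^2*c1*c2/2 + s*\<beta>*c2)"
  define x where "x = \<beta> + s*c1"
  have "((\<lambda>s. hfun c1 c2 \<beta> s $ n) has_field_derivative
      e * (c2*x) * (x^n / fact n) + e * (of_nat n * x^(n-1) * c1 / fact n)) (at s)"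
    unfolding hfun_nth e_def x_def
    by (auto intro!: derivative_eq_intros simp: field_simps power2_eq_square)
  moreover have "e * (c2*x) * (x^n / fact n) + e * (of_nat n * x^(n-1) * c1 / fact n)
     = Lop c1 c2 (hfun c1 c2 \<beta> s) $ n"
  proof (cases n)
    case 0 then show ?thesis by (simp add: Lop_nth hfun_nth e_def x_def field_simps)
  next
    case (Suc k)
    have f1: "(fact (Suc k) :: complex) = of_nat (Suc k) * fact k" by simp
    have f2: "(fact (Suc k + 1) :: complex) = of_nat (Suc (Suc k)) * (of_nat (Suc k) * fact k)" by simp
    show ?thesis unfolding Lop_nth hfun_nth e_def[symmetric] x_def[symmetric] Suc
      using hfun_aux[where F="fact k" and e=e and q=c2 and x=x and k=k and p=c1] by (simp only: f1 f2 diff_Suc_1 if_False Suc_neq_Zero fact_nonzero of_nat_eq_0_iff) simp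
  qed
  ultimately show ?thesis by simp
qed

lemma hfun_derivs: "(deriv ^^ m) (\<lambda>s. hfun c1 c2 \<beta> s $ n) = (\<lambda>s. (Lop c1 c2 ^^ m) (hfun c1 c2 \<beta> s) $ n)"
proof (induction m arbitrary: n)
  case 0 then show ?case by simp
next
  case (Suc m)
  have "(deriv ^^ Suc m) (\<lambda>s. hfun c1 c2 \<beta> s $ n) = deriv (\<lambda>s. (Lop c1 c2 ^^ m) (hfun c1 c2 \<beta> s) $ n)"
    by (simp add: Suc)
  also have "\<dots> = (\<lambda>s. (Lop c1 c2 ^^ m) (Lop c1 c2 (hfun c1 c2 \<beta> s)) $ n)"
    by (rule ext, rule DERIV_imp_deriv, rule Lopm_deriv, rule hfun_deriv)
  finally show ?case by (simp add: funpow_Suc_right del: funpow.simps)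
qed

lemma ExpL_exp_sums: "(\<lambda>m. (Lop c1 c2 ^^ m) (fps_exp \<beta>) $ n / fact m) sums (hfun c1 c2 \<beta> 1 $ n)"
proof -
  have hol: "(\<lambda>s. hfun c1 c2 \<beta> s $ n) holomorphic_on ball 0 2"
    unfolding hfun_nth by (intro holomorphic_intros) auto
  have "(\<lambda>m. (deriv ^^ m) (\<lambda>s. hfun c1 c2 \<beta> s $ n) 0 / fact m * (1 - 0)^m) sums (hfun c1 c2 \<beta> 1 $ n)"
    by (rule holomorphic_power_series[OF hol]) simp
  moreover have "hfun c1 c2 \<beta> 0 = fps_exp \<beta>" unfolding hfun_def by simp
  ultimately show ?thesis by (simp add: hfun_derivs)
qed

lemma summL_exp: "summL c1 c2 (fps_exp \<beta>)"
  unfolding summL_def using ExpL_exp_sums sums_summable by blast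

lemma ExpL_exp: "ExpL c1 c2 (fps_exp \<beta>) = fps_const (exp (c1*c2/2 + \<beta>*c2)) * fps_exp (\<beta> + c1)"
proof -
  have "ExpL c1 c2 (fps_exp \<beta>) = hfun c1 c2 \<beta> 1"
    by (rule fps_ext) (simp add: ExpL_nth sums_unique[OF ExpL_exp_sums, symmetric])
  then show ?thesis by (simp add: hfun_def)
qed

lemma summL_add:
  assumes "summL c1 c2 f" "summL c1 c2 g"
  shows "summL c1 c2 (f + g)" "ExpL c1 c2 (f + g) = ExpL c1 c2 f + ExpL c1 c2 g"
proof -
  have e: "(Lop c1 c2 ^^ m) (f + g) $ n / fact m = (Lop c1 c2 ^^ m) f $ n / fact m + (Lop c1 c2 ^^ m) g $ n / fact m" for m n
    by (simp add: Lopm_add add_divide_distrib)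
  show "summL c1 c2 (f + g)" using assms unfolding summL_def e by (auto intro: summable_add)
  show "ExpL c1 c2 (f + g) = ExpL c1 c2 f + ExpL c1 c2 g"
    using assms unfolding summL_def by (intro fps_ext) (simp add: ExpL_nth e suminf_add)
qed

lemma summL_const:
  assumes "summL c1 c2 f"
  shows "summL c1 c2 (fps_const a * f)" "ExpL c1 c2 (fps_const a * f) = fps_const a * ExpL c1 c2 f"
proof -
  have e: "(Lop c1 c2 ^^ m) (fps_const a * f) $ n / fact m = a * ((Lop c1 c2 ^^ m) f $ n / fact m)" for m n
    by (simp add: Lopm_const)
  show "summL c1 c2 (fps_const a * f)" using assms unfolding summL_def e by (simp only: summable_mult simp_thms)
  show "ExpL c1 c2 (fps_const a * f) = fps_const a * ExpL c1 c2 f"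
    using assms unfolding summL_def by (intro fps_ext) (simp only: ExpL_nth e suminf_mult fps_mult_left_const_nth simp_thms)
qed

lemma summL_zero: "summL c1 c2 0" "ExpL c1 c2 0 = 0"
  by (auto simp: summL_def ExpL_def Lopm_zero intro!: fps_ext)

lemma summL_sum:
  assumes "\<And>i. i \<in> A \<Longrightarrow> summL c1 c2 (f i)"
  shows "summL c1 c2 (\<Sum>i\<in>A. f i) \<and> ExpL c1 c2 (\<Sum>i\<in>A. f i) = (\<Sum>i\<in>A. ExpL c1 c2 (f i))"
  using assms
proof (induction A rule: infinite_finite_induct)
  case (infinite A) then show ?case by (simp add: summL_zero)
next
  case empty then show ?case by (simp add: summL_zero)
next
  case (insert x F)
  then show ?case by (simp add: summL_add)
qed

lemma summL_X:
  assumes "summL c1 c2 g"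
  shows "summL c1 c2 (fps_X * g)" "ExpL c1 c2 (fps_X * g) = (fps_X + fps_const c2) * ExpL c1 c2 g"
proof -
  have s1: "(\<lambda>m. (if n = 0 then 0 else (Lop c1 c2 ^^ m) g $ (n - 1)) / fact m) sums (if n = 0 then 0 else ExpL c1 c2 g $ (n - 1))" for n
    using assms unfolding summL_def ExpL_nth by (cases "n = 0") (auto intro: summable_sums)
  have s2: "(\<lambda>m. of_nat m * c2 * (Lop c1 c2 ^^ (m - 1)) g $ n / fact m) sums (c2 * ExpL c1 c2 g $ n)" for n
  proof -
    have "(\<lambda>m. c2 * ((Lop c1 c2 ^^ m) g $ n / fact m)) sums (c2 * ExpL c1 c2 g $ n)"
      using assms unfolding summL_def ExpL_nth by (intro sums_mult summable_sums) auto
    moreover have "c2 * ((Lop c1 c2 ^^ m) g $ n / fact m) = of_nat (Suc m) * c2 * (Lop c1 c2 ^^ (Suc m - 1)) g $ n / fact (Suc m)" for m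
      by (simp add: field_simps del: of_nat_Suc)
    ultimately have "(\<lambda>m. of_nat (Suc m) * c2 * (Lop c1 c2 ^^ (Suc m - 1)) g $ n / fact (Suc m)) sums (c2 * ExpL c1 c2 g $ n)"
      by simp
    then show ?thesis by (subst (asm) sums_Suc_iff) simp
  qed
  have e: "(Lop c1 c2 ^^ m) (fps_X * g) $ n / fact m = (if n = 0 then 0 else (Lop c1 c2 ^^ m) g $ (n - 1)) / fact m
            + of_nat m * c2 * (Lop c1 c2 ^^ (m - 1)) g $ n / fact m" for m n
    by (simp add: Lopm_X add_divide_distrib)
  have s: "(\<lambda>m. (Lop c1 c2 ^^ m) (fps_X * g) $ n / fact m) sums ((if n = 0 then 0 else ExpL c1 c2 g $ (n - 1)) + c2 * ExpL c1 c2 g $ n)" for n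
    unfolding e by (intro sums_add s1 s2)
  show "summL c1 c2 (fps_X * g)" unfolding summL_def using s sums_summable by blast
  show "ExpL c1 c2 (fps_X * g) = (fps_X + fps_const c2) * ExpL c1 c2 g"
    by (rule fps_ext) (simp add: ExpL_nth[of _ _ "fps_X * g"] sums_unique[OF s, symmetric] distrib_right)
qed

lemma summL_poly:
  assumes "summL c1 c2 f"
  shows "summL c1 c2 (fps_of_poly Q * f) \<and> ExpL c1 c2 (fps_of_poly Q * f) = fps_of_poly (pcompose Q [:c2, 1:]) * ExpL c1 c2 f"
proof (induction Q rule: pCons_induct)
  case 0 then show ?case by (simp add: summL_zero)
next
  case (pCons a p)
  have eq: "fps_of_poly (pCons a p) * f = fps_const a * f + fps_X * (fps_of_poly p * f)"
    by (simp add: fps_of_poly_pCons algebra_simps)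
  have sx: "summL c1 c2 (fps_X * (fps_of_poly p * f))"
    "ExpL c1 c2 (fps_X * (fps_of_poly p * f)) = (fps_X + fps_const c2) * (fps_of_poly (pcompose p [:c2, 1:]) * ExpL c1 c2 f)"
    using summL_X[of c1 c2 "fps_of_poly p * f"] pCons.IH by auto
  have hc: "fps_of_poly (pcompose (pCons a p) [:c2, 1:]) = fps_const a + (fps_X + fps_const c2) * fps_of_poly (pcompose p [:c2, 1:])"
    by (simp add: pcompose_pCons fps_of_poly_add fps_of_poly_mult fps_of_poly_const fps_of_poly_linear)
  have ex: "ExpL c1 c2 (fps_of_poly (pCons a p) * f) = fps_const a * ExpL c1 c2 f + (fps_X + fps_const c2) * (fps_of_poly (pcompose p [:c2, 1:]) * ExpL c1 c2 f)"
    unfolding eq using summL_add(2)[OF summL_const(1)[OF assms] sx(1)] summL_const(2)[OF assms] sx(2)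
    by simp
  show ?case
  proof
    show "summL c1 c2 (fps_of_poly (pCons a p) * f)" unfolding eq
      using summL_add(1)[OF summL_const(1)[OF assms] sx(1)] .
    show "ExpL c1 c2 (fps_of_poly (pCons a p) * f) = fps_of_poly (pcompose (pCons a p) [:c2, 1:]) * ExpL c1 c2 f"
      unfolding ex hc by (simp add: algebra_simps)
  qed
qed



definition Tv :: "complex fps \<Rightarrow> fvec" where
  "Tv g = (\<lambda>n. complex_of_real (sqrt (fact n)) * g $ n)"

lemma sqrt_fact_Suc: "sqrt (fact (Suc n) :: real) = sqrt (real (Suc n)) * sqrt (fact n)"
  by (simp add: real_sqrt_mult)

lemma adag_T: "adag (Tv g) = Tv (fps_X * g)"
proof
  fix n show "adag (Tv g) n = Tv (fps_X * g) n"
    by (cases n) (simp_all add: adag_def Tv_def real_sqrt_mult of_real_mult mult.assoc del: of_nat_Suc)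
qed

lemma ann_T: "ann (Tv g) = Tv (fps_deriv g)"
proof
  fix n
  have "sqrt (real (Suc n)) * sqrt (fact (Suc n)) = real (Suc n) * sqrt (fact n)"
    by (simp only: sqrt_fact_Suc mult.assoc[symmetric]) (simp del: of_nat_Suc)
  then have "complex_of_real (sqrt (real (Suc n))) * complex_of_real (sqrt (fact (Suc n))) = of_nat (Suc n) * complex_of_real (sqrt (fact n))"
    by (metis of_real_mult of_real_of_nat_eq)
  then show "ann (Tv g) n = Tv (fps_deriv g) n"
    unfolding ann_def Tv_def fps_deriv_nth
    by (simp only: mult.assoc[symmetric]) (simp add: ac_simps)
qed

lemma Tv_add: "Tv (f + g) = (\<lambda>n. Tv f n + Tv g n)"
  by (simp add: Tv_def fun_eq_iff distrib_left)

lemma Tv_const: "Tv (fps_const a * f) = (\<lambda>n. a * Tv f n)"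
  by (simp add: Tv_def fun_eq_iff)

lemma Tv_sum: "Tv (\<Sum>i\<in>A. f i) = (\<lambda>n. \<Sum>i\<in>A. Tv (f i) n)"
  by (simp add: Tv_def fun_eq_iff sum_distrib_left fps_sum_nth)

lemma Tv_eq_iff: "Tv f = Tv g \<longleftrightarrow> f = g"
proof
  assume "Tv f = Tv g"
  then have "\<And>n. complex_of_real (sqrt (fact n)) * f $ n = complex_of_real (sqrt (fact n)) * g $ n"
    unfolding Tv_def by meson
  then show "f = g" by (intro fps_ext) simp
qed simp

lemma displ_gen_T: "displ_gen b (Tv g) = Tv (Lop b (- cnj b) g)"
  by (simp add: displ_gen_def Lop_def adag_T[symmetric] ann_T[symmetric] Tv_add Tv_const mult.assoc)

lemma displ_gen_neg_T: "(\<lambda>\<psi> n. - displ_gen b \<psi> n) (Tv g) = Tv (Lop (- b) (cnj b) g)"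
  by (simp add: displ_gen_def Lop_def Tv_add Tv_const mult.assoc adag_T ann_T fun_eq_iff)

lemma funpow_T:
  assumes "\<And>g. F (Tv g) = Tv (Lop c1 c2 g)"
  shows "(F ^^ m) (Tv g) = Tv ((Lop c1 c2 ^^ m) g)"
  by (induction m) (simp_all add: assms)

lemma op_exp_T:
  assumes "\<And>g. F (Tv g) = Tv (Lop c1 c2 g)" "summL c1 c2 g"
  shows "op_exp F (Tv g) = Tv (ExpL c1 c2 g)"
proof
  fix n
  have "op_exp F (Tv g) n = (\<Sum>m. complex_of_real (sqrt (fact n)) * ((Lop c1 c2 ^^ m) g $ n / fact m))"
    unfolding op_exp_def funpow_T[OF assms(1)] by (simp add: Tv_def mult.assoc)
  also have "\<dots> = complex_of_real (sqrt (fact n)) * ExpL c1 c2 g $ n"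
    using assms(2) unfolding summL_def ExpL_nth by (intro suminf_mult) auto
  finally show "op_exp F (Tv g) n = Tv (ExpL c1 c2 g) n" by (simp add: Tv_def)
qed

lemma coh_aux: "(s::complex) \<noteq> 0 \<Longrightarrow> e * x / s = s * (e * (x / (s * s)))"
  by (simp add: field_simps)

lemma coh_T: "coh \<beta> = Tv (fps_const (complex_of_real (exp (- ((cmod \<beta>)^2) / 2))) * fps_exp \<beta>)"
proof
  fix n
  have s: "(fact n :: complex) = complex_of_real (sqrt (fact n)) * complex_of_real (sqrt (fact n))"
  proof -
    have "sqrt (fact n) * sqrt (fact n) = (fact n :: real)" by simp
    then have "complex_of_real (sqrt (fact n) * sqrt (fact n)) = complex_of_real (fact n)" by (rule arg_cong)
    then show ?thesis by (simp only: of_real_mult of_real_fact)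
  qed
  have nz: "complex_of_real (sqrt (fact n)) \<noteq> 0" by simp
  show "coh \<beta> n = Tv (fps_const (complex_of_real (exp (- ((cmod \<beta>)^2) / 2))) * fps_exp \<beta>) n"
    unfolding coh_def Tv_def fps_mult_left_const_nth fps_exp_nth of_nat_fact s
    by (rule coh_aux[OF nz])
qed

lemma ExpL_expsum:
  "summL c1 c2 (\<Sum>i\<in>A. fps_const (c i) * fps_exp (\<beta> i)) \<and>
   ExpL c1 c2 (\<Sum>i\<in>A. fps_const (c i) * fps_exp (\<beta> i)) =
     (\<Sum>i\<in>A. fps_const (c i * exp (c1*c2/2 + \<beta> i * c2)) * fps_exp (\<beta> i + c1))"
proof -
  have "summL c1 c2 (fps_const (c i) * fps_exp (\<beta> i))" for i
    by (rule summL_const(1)[OF summL_exp])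
  from summL_sum[of A c1 c2, OF this] show ?thesis
    by (simp add: summL_const(2)[OF summL_exp] ExpL_exp mult.assoc fps_const_mult[symmetric] del: fps_const_mult)
qed

lemma pcomp_lemma: "pcompose ([:0, 1:] * pcompose Q [:c, 1:]) [:- c, 1:] = [:- c, 1:] * (Q :: complex poly)"
proof -
  have a: "pcompose [:0, 1::complex:] [:- c, 1:] = [:- c, 1:]"
    by (simp add: pcompose_pCons)
  have b: "pcompose [:c, 1::complex:] [:- c, 1:] = [:0, 1:]"
    by (simp add: pcompose_pCons)
  show ?thesis
    by (simp only: pcompose_mult a pcompose_assoc[symmetric] b pcompose_idR)
qed



lemma dad_T:
  "dad b (Tv (fps_of_poly Q * (\<Sum>i\<in>A. fps_const (c i) * fps_exp (\<beta> i)))) =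
   Tv (fps_of_poly ([:- cnj b, 1:] * Q) * (\<Sum>i\<in>A. fps_const (c i) * fps_exp (\<beta> i)))"
proof -
  define S where "S = (\<Sum>i\<in>A. fps_const (c i) * fps_exp (\<beta> i))"
  define K1 where "K1 i = c i * exp (- b * cnj b / 2 + \<beta> i * cnj b)" for i
  define S1 where "S1 = (\<Sum>i\<in>A. fps_const (K1 i) * fps_exp (\<beta> i - b))"
  have e1: "summL (- b) (cnj b) S" "ExpL (- b) (cnj b) S = S1"
    using ExpL_expsum[of "- b" "cnj b" c \<beta> A] unfolding S_def S1_def K1_def by simp_all
  have p1: "summL (- b) (cnj b) (fps_of_poly Q * S)"
    "ExpL (- b) (cnj b) (fps_of_poly Q * S) = fps_of_poly (pcompose Q [:cnj b, 1:]) * S1"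
    using summL_poly[OF e1(1), of Q] e1(2) by simp_all
  have step1: "displ_adj b (Tv (fps_of_poly Q * S)) = Tv (fps_of_poly (pcompose Q [:cnj b, 1:]) * S1)"
    unfolding displ_adj_def by (subst op_exp_T[OF displ_gen_neg_T p1(1)]) (simp add: p1(2))
  have step2: "adag (Tv (fps_of_poly (pcompose Q [:cnj b, 1:]) * S1)) = Tv (fps_of_poly ([:0, 1:] * pcompose Q [:cnj b, 1:]) * S1)"
    by (simp add: adag_T fps_of_poly_pCons mult_ac)
  have kk: "K1 i * exp (- (b * cnj b / 2) - (\<beta> i - b) * cnj b) = c i" for i
  proof -
    have "K1 i * exp (- (b * cnj b / 2) - (\<beta> i - b) * cnj b) = c i * exp ((- b * cnj b / 2 + \<beta> i * cnj b) + (- (b * cnj b / 2) - (\<beta> i - b) * cnj b))"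
      by (simp only: K1_def mult.assoc exp_add)
    also have "(- b * cnj b / 2 + \<beta> i * cnj b) + (- (b * cnj b / 2) - (\<beta> i - b) * cnj b) = 0"
      by (simp add: algebra_simps)
    finally show ?thesis by simp
  qed
  have e2: "summL b (- cnj b) S1" "ExpL b (- cnj b) S1 = S"
    using ExpL_expsum[of b "- cnj b" K1 "\<lambda>i. \<beta> i - b" A] unfolding S_def S1_def by (simp_all add: kk)
  have p2': "summL b (- cnj b) (fps_of_poly ([:0, 1:] * pcompose Q [:cnj b, 1:]) * S1) \<and>
    ExpL b (- cnj b) (fps_of_poly ([:0, 1:] * pcompose Q [:cnj b, 1:]) * S1) = fps_of_poly ([:- cnj b, 1:] * Q) * S"
    using summL_poly[OF e2(1), of "[:0, 1:] * pcompose Q [:cnj b, 1:]"] by (simp only: pcomp_lemma e2(2))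
  note p2 = conjunct1[OF p2'] conjunct2[OF p2']
  have step3: "displ b (Tv (fps_of_poly ([:0, 1:] * pcompose Q [:cnj b, 1:]) * S1)) = Tv (fps_of_poly ([:- cnj b, 1:] * Q) * S)"
    unfolding displ_def by (subst op_exp_T[OF displ_gen_T p2(1)]) (simp only: p2(2))
  show ?thesis unfolding S_def[symmetric] dad_def step1 step2 step3 ..
qed

definition Qbs :: "complex list \<Rightarrow> complex poly" where
  "Qbs bs = foldr (\<lambda>b p. [:- cnj b, 1:] * p) bs 1"

lemma Qbs_Cons: "Qbs (b # bs) = [:- cnj b, 1:] * Qbs bs"
  by (simp add: Qbs_def)

lemma Qbs_nz: "Qbs bs \<noteq> 0"
proof (induction bs)
  case Nil then show ?case by (simp add: Qbs_def)
next
  case (Cons b bs)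
  have "[:- cnj b, 1:] \<noteq> 0" by simp
  with Cons show ?case unfolding Qbs_Cons by (simp only: mult_eq_0_iff de_Morgan_disj) simp
qed

lemma Qbs_degree: "degree (Qbs bs) \<le> length bs"
proof (induction bs)
  case Nil then show ?case by (simp add: Qbs_def)
next
  case (Cons b bs)
  have "degree (Qbs (b # bs)) \<le> degree [:- cnj b, 1:] + degree (Qbs bs)"
    unfolding Qbs_Cons by (rule degree_mult_le)
  then show ?case using Cons by simp
qed

lemma foldr_dad:
  "foldr dad bs (Tv (\<Sum>i\<in>A. fps_const (c i) * fps_exp (\<beta> i))) =
   Tv (fps_of_poly (Qbs bs) * (\<Sum>i\<in>A. fps_const (c i) * fps_exp (\<beta> i)))"
proof (induction bs)
  case Nil then show ?case by (simp add: Qbs_def)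
next
  case (Cons b bs)
  then show ?case by (simp add: dad_T Qbs_Cons)
qed

lemma ann_scale: "ann (\<lambda>n. x * f n) = (\<lambda>n. x * ann f n)"
  by (simp add: ann_def fun_eq_iff ac_simps)

lemma ann_coh: "ann (coh a) = (\<lambda>n. a * coh a n)"
  unfolding coh_T ann_T by (simp add: Tv_const[symmetric] mult.assoc[symmetric] mult.commute)

lemma squeeze_nz: "squeeze z (coh \<alpha>) 0 \<noteq> 0"
proof -
  define r where "r = cmod z"
  define t where "t = (if z = 0 then 0 else (z / complex_of_real r) * complex_of_real (tanh r))"
  define Z where "Z = (\<lambda>(\<phi>::fvec) n. (cnj t / 2) * ann (ann \<phi>) n)"
  define w where "w = cnj t / 2 * (\<alpha> * \<alpha>)"
  define right where "right = op_exp Z (coh \<alpha>)"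
  define mid where "mid = (\<lambda>n. complex_of_real ((cosh r) powr (- (real n + 1/2))) * right n)"
  define Y where "Y = (\<lambda>(\<phi>::fvec) n. - (t / 2) * adag (adag \<phi>) n)"
  have sq: "squeeze z (coh \<alpha>) = op_exp Y mid"
    unfolding squeeze_def Let_def r_def[symmetric] t_def[symmetric] Y_def mid_def right_def Z_def ..
  have Zm: "(Z ^^ m) (coh \<alpha>) = (\<lambda>n. w ^ m * coh \<alpha> n)" for m
  proof (induction m)
    case 0 then show ?case by simp
  next
    case (Suc m)
    have "(Z ^^ Suc m) (coh \<alpha>) = Z (\<lambda>n. w ^ m * coh \<alpha> n)" using Suc by simp
    also have "\<dots> = (\<lambda>n. w ^ Suc m * coh \<alpha> n)"
      by (simp only: Z_def ann_scale ann_coh) (simp add: w_def fun_eq_iff ac_simps)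
    finally show ?case .
  qed
  have "(\<lambda>m. w ^ m /\<^sub>R fact m * coh \<alpha> 0) sums (exp w * coh \<alpha> 0)"
    by (intro sums_mult2 exp_converges)
  then have "(\<lambda>m. (Z ^^ m) (coh \<alpha>) 0 / fact m) sums (exp w * coh \<alpha> 0)"
    by (simp add: Zm scaleR_conv_of_real field_simps)
  then have r0: "right 0 = exp w * coh \<alpha> 0"
    unfolding right_def op_exp_def by (simp add: sums_iff)
  have c0: "coh \<alpha> 0 \<noteq> 0" by (simp add: coh_def)
  have cpos: "cosh r > 0" by (simp add: cosh_real_pos)
  have m0: "mid 0 \<noteq> 0" using cpos c0 by (simp add: mid_def r0)
  have Y0: "(Y ^^ Suc m) mid 0 = 0" for m by (simp add: Y_def adag_def)
  have "(\<lambda>m. (Y ^^ m) mid 0 / fact m) = (\<lambda>m. if m = 0 then mid 0 else 0)"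
  proof
    fix m show "(Y ^^ m) mid 0 / fact m = (if m = 0 then mid 0 else 0)"
      by (cases m) (simp_all only: Y0, simp_all)
  qed
  then have "op_exp Y mid 0 = mid 0"
    unfolding op_exp_def using sums_single[of 0 "\<lambda>_. mid 0"] by (simp add: sums_iff)
  then show ?thesis using sq m0 by simp
qed



definition mb :: "complex fps \<Rightarrow> real \<Rightarrow> real \<Rightarrow> bool" where
  "mb f a x \<longleftrightarrow> (\<forall>n. cmod (f $ n) \<le> a * x ^ n / fact n)"

lemma exp_conv_real: "(\<Sum>i=0..n. (x::real) ^ i / fact i * (y ^ (n - i) / fact (n - i))) = (x + y) ^ n / fact n"
proof -
  have "(fps_exp x * fps_exp y) $ n = fps_exp (x + y) $ n" by (simp add: fps_exp_add_mult)
  then show ?thesis by (simp add: fps_mult_nth)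
qed

lemma mb_mult:
  assumes "mb f a x" "mb g b y"
  shows "mb (f * g) (a * b) (x + y)"
  unfolding mb_def
proof
  fix n
  have "cmod ((f * g) $ n) \<le> (\<Sum>i=0..n. cmod (f $ i) * cmod (g $ (n - i)))"
    unfolding fps_mult_nth by (rule order.trans[OF norm_sum]) (simp add: norm_mult)
  also have "\<dots> \<le> (\<Sum>i=0..n. (a * x ^ i / fact i) * (b * y ^ (n - i) / fact (n - i)))"
  proof (rule sum_mono)
    fix i
    have "0 \<le> cmod (f $ i)" by simp
    then have "0 \<le> a * x ^ i / fact i" using assms(1) unfolding mb_def by (meson order.trans)
    then show "cmod (f $ i) * cmod (g $ (n - i)) \<le> (a * x ^ i / fact i) * (b * y ^ (n - i) / fact (n - i))"
      using assms unfolding mb_def by (intro mult_mono) auto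
  qed
  also have "\<dots> = a * b * (\<Sum>i=0..n. x ^ i / fact i * (y ^ (n - i) / fact (n - i)))"
    by (simp add: sum_distrib_left field_simps)
  also have "\<dots> = a * b * (x + y) ^ n / fact n" by (simp only: exp_conv_real) simp
  finally show "cmod ((f * g) $ n) \<le> a * b * (x + y) ^ n / fact n" .
qed

lemma mb_add:
  assumes "mb f a x" "mb g b x"
  shows "mb (f + g) (a + b) x"
  using assms unfolding mb_def
  by (auto intro: order.trans[OF norm_triangle_ineq] simp: add_divide_distrib distrib_right add_mono)

lemma mb_diff:
  assumes "mb f a x" "mb g b x"
  shows "mb (f - g) (a + b) x"
  using assms unfolding mb_def
  by (auto intro: order.trans[OF norm_triangle_ineq4] simp: add_divide_distrib distrib_right add_mono)

lemma mb_const: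
  assumes "mb f a x"
  shows "mb (fps_const c * f) (cmod c * a) x"
  unfolding mb_def
proof
  fix n
  have "cmod c * cmod (f $ n) \<le> cmod c * (a * x ^ n / fact n)"
    using assms unfolding mb_def by (intro mult_left_mono) auto
  then show "cmod ((fps_const c * f) $ n) \<le> cmod c * a * x ^ n / fact n"
    by (simp add: norm_mult)
qed

lemma mb_mono:
  assumes "mb f a x" "a \<le> a'" "0 \<le> a" "0 \<le> x" "x \<le> x'"
  shows "mb f a' x'"
  unfolding mb_def
proof
  fix n
  have "a * x ^ n \<le> a' * x' ^ n"
    using assms by (intro mult_mono power_mono) auto
  then have "a * x ^ n / fact n \<le> a' * x' ^ n / fact n" by (simp add: divide_right_mono)
  then show "cmod (f $ n) \<le> a' * x' ^ n / fact n" using assms(1) unfolding mb_def by (meson order.trans)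
qed

lemma mb_nonneg: "mb f a x \<Longrightarrow> 0 \<le> a"
  unfolding mb_def by (drule spec[of _ 0]) (auto intro: order.trans[OF norm_ge_zero])

lemma mb_sum:
  assumes "\<And>i. i \<in> A \<Longrightarrow> mb (f i) (a i) x"
  shows "mb (\<Sum>i\<in>A. f i) (\<Sum>i\<in>A. a i) x"
  using assms
proof (induction A rule: infinite_finite_induct)
  case (infinite A) then show ?case by (simp add: mb_def)
next
  case empty then show ?case by (simp add: mb_def)
next
  case (insert y F) then show ?case by (simp add: mb_add)
qed

lemma mb_exp: "mb (fps_exp \<beta>) 1 (cmod \<beta>)"
  unfolding mb_def by (simp add: norm_divide norm_power)

lemma mb_X: "mb fps_X 1 1"
  unfolding mb_def by simp

lemma mb_one: "mb 1 1 0"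
  unfolding mb_def by simp

lemma mb_power:
  assumes "mb f a x"
  shows "mb (f ^ m) (a ^ m) (of_nat m * x)"
proof (induction m)
  case 0 then show ?case by (simp add: mb_one)
next
  case (Suc m)
  have "mb (f * f ^ m) (a * a ^ m) (x + of_nat m * x)" by (rule mb_mult[OF assms Suc])
  then show ?case by (simp add: algebra_simps)
qed

definition Bf :: "real \<Rightarrow> complex fps" where
  "Bf e = fps_const (complex_of_real (1 / e)) * (fps_exp (complex_of_real e) - 1)"

lemma Bf_nth:
  assumes "e \<noteq> 0"
  shows "Bf e $ n = (if n = 0 then 0 else complex_of_real (e ^ (n - 1) / fact n))"
proof (cases n)
  case 0 then show ?thesis by (simp add: Bf_def)
next
  case (Suc k)
  have "Bf e $ n = complex_of_real (1 / e) * (complex_of_real e ^ Suc k / fact (Suc k))"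
    by (simp only: Bf_def fps_mult_left_const_nth fps_sub_nth fps_exp_nth of_nat_fact Suc fps_one_nth nat.distinct if_False diff_zero)
  also have "\<dots> = (complex_of_real (1 / e) * complex_of_real e) * (complex_of_real e ^ k / fact (Suc k))"
    by (simp only: power_Suc mult.assoc times_divide_eq_right)
  also have "complex_of_real (1 / e) * complex_of_real e = 1" using assms by (simp flip: of_real_mult)
  also have "1 * (complex_of_real e ^ k / fact (Suc k)) = complex_of_real (e ^ k / fact (Suc k))"
    by simp
  finally show ?thesis by (simp only: Suc diff_Suc_1 nat.distinct if_False)
qed

lemma Bf_norm:
  assumes "0 < e"
  shows "cmod (Bf e $ n) = (if n = 0 then 0 else e ^ (n - 1) / fact n)"
  using assms by (simp add: Bf_nth norm_divide norm_power)

lemma mb_B: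
  assumes "0 < e" "e \<le> 1"
  shows "mb (Bf e) 1 1"
  unfolding mb_def
proof
  fix n
  have "e ^ (n - 1) \<le> 1" using assms by (intro power_le_one) auto
  then have "e ^ (n - 1) / fact n \<le> 1 / (fact n :: real)" by (simp add: divide_right_mono)
  then show "cmod (Bf e $ n) \<le> 1 * 1 ^ n / fact n"
    using assms by (simp add: Bf_norm)
qed

lemma mb_XB:
  assumes "0 < e" "e \<le> 1"
  shows "mb (fps_X - Bf e) e 1"
  unfolding mb_def
proof
  fix n
  show "cmod ((fps_X - Bf e) $ n) \<le> e * 1 ^ n / fact n"
  proof (cases "n \<le> 1")
    case True
    then have "n = 0 \<or> n = 1" by auto
    then show ?thesis using assms by (auto simp: Bf_nth)
  next
    case False
    then obtain k where k: "n = Suc (Suc k)" by (metis One_nat_def Suc_pred' not_less_eq_eq not_gr0 le0)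
    have "e ^ (Suc k) = e * e ^ k" by simp
    also have "\<dots> \<le> e * 1" using assms by (intro mult_left_mono power_le_one) auto
    finally have "e ^ (n - 1) / fact n \<le> e / (fact n :: real)" using k by (simp add: divide_right_mono)
    have "(fps_X - Bf e) $ n = - (Bf e $ n)" using k by simp
    then show ?thesis using assms k \<open>e ^ (n - 1) / fact n \<le> e / (fact n :: real)\<close>
      by (simp only: norm_minus_cancel Bf_norm) simp
  qed
qed

lemma mb_powdiff:
  assumes "0 < e" "e \<le> 1" "m \<le> r"
  shows "mb (fps_X ^ m - Bf e ^ m) (e * real r) (real r + 1)"
proof -
  have t: "mb (Bf e ^ (m - Suc i) * fps_X ^ i) 1 (real m)" if "i < m" for i
  proof -
    have "mb (Bf e ^ (m - Suc i) * fps_X ^ i) (1 ^ (m - Suc i) * 1 ^ i) (real (m - Suc i) * 1 + real i * 1)"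
      by (intro mb_mult mb_power mb_B mb_X assms)
    then show ?thesis by (rule mb_mono) (use that in auto)
  qed
  have "mb (\<Sum>i<m. Bf e ^ (m - Suc i) * fps_X ^ i) (\<Sum>i<m. 1) (real m)"
    by (intro mb_sum t) simp
  then have "mb ((fps_X - Bf e) * (\<Sum>i<m. Bf e ^ (m - Suc i) * fps_X ^ i)) (e * real m) (1 + real m)"
    using mb_mult[OF mb_XB[OF assms(1,2)]] by simp
  then have "mb (fps_X ^ m - Bf e ^ m) (e * real m) (1 + real m)"
    by (simp only: power_diff_sumr2)
  then show ?thesis by (rule mb_mono) (use assms in auto)
qed

definition Pf :: "real \<Rightarrow> complex poly \<Rightarrow> nat \<Rightarrow> complex fps" where
  "Pf e Q r = (\<Sum>m\<le>r. fps_const (coeff Q m) * Bf e ^ m)"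

lemma fps_of_poly_monoms:
  assumes "degree Q \<le> r"
  shows "fps_of_poly Q = (\<Sum>m\<le>r. fps_const (coeff Q m) * fps_X ^ m)"
proof (rule fps_ext)
  fix n
  have "(\<Sum>m\<le>r. fps_const (coeff Q m) * fps_X ^ m) $ n = (\<Sum>m\<le>r. if n = m then coeff Q m else 0)"
    unfolding fps_sum_nth by (intro sum.cong refl) simp
  also have "\<dots> = coeff Q n"
    using assms coeff_eq_0[of Q n] by (auto simp: sum.delta')
  finally show "fps_of_poly Q $ n = (\<Sum>m\<le>r. fps_const (coeff Q m) * fps_X ^ m) $ n" by simp
qed

lemma mb_polydiff:
  assumes "0 < e" "e \<le> 1" "degree Q \<le> r"
  shows "mb (fps_of_poly Q - Pf e Q r) (e * real r * (\<Sum>m\<le>r. cmod (coeff Q m))) (real r + 1)"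
proof -
  have "fps_of_poly Q - Pf e Q r = (\<Sum>m\<le>r. fps_const (coeff Q m) * (fps_X ^ m - Bf e ^ m))"
    unfolding fps_of_poly_monoms[OF assms(3)] Pf_def by (simp add: sum_subtractf right_diff_distrib)
  moreover have "mb (\<Sum>m\<le>r. fps_const (coeff Q m) * (fps_X ^ m - Bf e ^ m)) (\<Sum>m\<le>r. cmod (coeff Q m) * (e * real r)) (real r + 1)"
    by (intro mb_sum mb_const mb_powdiff assms) simp
  ultimately show ?thesis by (simp add: sum_distrib_left sum_distrib_right mult_ac)
qed

lemma mb_poly:
  assumes "degree Q \<le> r"
  shows "mb (fps_of_poly Q) (\<Sum>m\<le>r. cmod (coeff Q m)) (real r + 1)"
proof -
  have "mb (\<Sum>m\<le>r. fps_const (coeff Q m) * fps_X ^ m) (\<Sum>m\<le>r. cmod (coeff Q m) * 1) (real r + 1)"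
  proof (intro mb_sum mb_const)
    fix m assume "m \<in> {..r}"
    have "mb (fps_X ^ m) (1 ^ m) (real m * 1)" by (intro mb_power mb_X)
    then show "mb (fps_X ^ m) 1 (real r + 1)" by (rule mb_mono) (use \<open>m \<in> {..r}\<close> in auto)
  qed
  then show ?thesis unfolding fps_of_poly_monoms[OF assms] by simp
qed

lemma mb_S:
  "mb (\<Sum>i\<in>A. fps_const (a i) * fps_exp (\<beta> i)) (\<Sum>i\<in>A. cmod (a i) * 1) (\<Sum>i\<in>A. cmod (\<beta> i))"
proof (cases "finite A")
  case True
  show ?thesis
  proof (intro mb_sum mb_const)
    fix i assume "i \<in> A"
    have "cmod (\<beta> i) \<le> (\<Sum>i\<in>A. cmod (\<beta> i))"
      using True \<open>i \<in> A\<close> by (intro member_le_sum) auto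
    then show "mb (fps_exp (\<beta> i)) 1 (\<Sum>i\<in>A. cmod (\<beta> i))"
      by (intro mb_mono[OF mb_exp]) auto
  qed
qed (simp add: mb_def)

lemma Bf_pow_repr:
  assumes "e \<noteq> 0" "m \<le> r"
  shows "Bf e ^ m = (\<Sum>j\<le>r. fps_const (if j \<le> m then complex_of_real (1 / e) ^ m * of_nat (m choose j) * (- 1) ^ (m - j) else 0)
                        * fps_exp (of_nat j * complex_of_real e))"
proof -
  define E where "E = fps_exp (complex_of_real e)"
  have "(E + (- 1)) ^ m = (\<Sum>j\<le>m. of_nat (m choose j) * E ^ j * (- 1) ^ (m - j))"
    by (rule binomial_ring)
  then have "Bf e ^ m = fps_const (complex_of_real (1 / e) ^ m) * (\<Sum>j\<le>m. of_nat (m choose j) * E ^ j * (- 1) ^ (m - j))"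
    unfolding Bf_def E_def[symmetric] by (simp add: power_mult_distrib)
  also have "\<dots> = (\<Sum>j\<le>m. fps_const (complex_of_real (1 / e) ^ m * of_nat (m choose j) * (- 1) ^ (m - j)) * fps_exp (of_nat j * complex_of_real e))"
    unfolding sum_distrib_left
  proof (rule sum.cong[OF refl])
    fix j
    have "(- 1 :: complex fps) ^ (m - j) = fps_const ((- 1) ^ (m - j))"
      by (simp only: fps_const_1_eq_1[symmetric] fps_const_neg fps_const_power)
    moreover have "(of_nat (m choose j) :: complex fps) = fps_const (of_nat (m choose j))" by (simp add: fps_of_nat)
    moreover have "E ^ j = fps_exp (of_nat j * complex_of_real e)" unfolding E_def by (rule fps_exp_power_mult)
    ultimately show "fps_const (complex_of_real (1 / e) ^ m) * (of_nat (m choose j) * E ^ j * (- 1) ^ (m - j)) =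
         fps_const (complex_of_real (1 / e) ^ m * of_nat (m choose j) * (- 1) ^ (m - j)) * fps_exp (of_nat j * complex_of_real e)"
      by (simp only:) (simp add: mult_ac)
  qed
  also have "\<dots> = (\<Sum>j\<le>r. fps_const (if j \<le> m then complex_of_real (1 / e) ^ m * of_nat (m choose j) * (- 1) ^ (m - j) else 0)
                        * fps_exp (of_nat j * complex_of_real e))"
  proof -
    have "{j \<in> {..r}. j \<le> m} = {..m}" using assms by auto
    then have pad: "(\<Sum>j\<le>r. if j \<le> m then h j else 0) = (\<Sum>j\<le>m. h j)" for h :: "nat \<Rightarrow> complex fps"
      by (simp only: sum.inter_filter[OF finite_atMost, symmetric])
    show ?thesis
      by (subst pad[symmetric]) (intro sum.cong refl, simp)
  qed
  finally show ?thesis .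
qed

lemma fps_const_sum: "fps_const (\<Sum>i\<in>A. f i) = (\<Sum>i\<in>A. fps_const (f i))"
proof (induction A rule: infinite_finite_induct)
  case (insert x F)
  show ?case by (simp only: sum.insert[OF insert.hyps] fps_const_add[symmetric] insert.IH)
qed simp_all

lemma Pf_repr:
  assumes "e \<noteq> 0"
  shows "\<exists>d. Pf e Q r = (\<Sum>j\<le>r. fps_const (d j) * fps_exp (of_nat j * complex_of_real e))"
proof -
  define g where "g m j = (if j \<le> m then complex_of_real (1 / e) ^ m * of_nat (m choose j) * (- 1) ^ (m - j) else 0)" for m j
  have "Pf e Q r = (\<Sum>m\<le>r. fps_const (coeff Q m) * (\<Sum>j\<le>r. fps_const (g m j) * fps_exp (of_nat j * complex_of_real e)))"
    unfolding Pf_def g_def by (intro sum.cong refl) (simp add: Bf_pow_repr[OF assms])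
  also have "\<dots> = (\<Sum>m\<le>r. \<Sum>j\<le>r. fps_const (coeff Q m * g m j) * fps_exp (of_nat j * complex_of_real e))"
    by (simp only: sum_distrib_left mult.assoc[symmetric] fps_const_mult)
  also have "\<dots> = (\<Sum>j\<le>r. \<Sum>m\<le>r. fps_const (coeff Q m * g m j) * fps_exp (of_nat j * complex_of_real e))"
    by (rule sum.swap)
  also have "\<dots> = (\<Sum>j\<le>r. fps_const (\<Sum>m\<le>r. coeff Q m * g m j) * fps_exp (of_nat j * complex_of_real e))"
    by (simp only: sum_distrib_right fps_const_sum)
  finally show ?thesis by (intro exI[of _ "\<lambda>j. \<Sum>m\<le>r. coeff Q m * g m j"])
qed



lemma sqn_T: "sq_norm_f (Tv f) = (\<Sum>n. fact n * (cmod (f $ n))^2)"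
proof -
  have "(cmod (Tv f n))^2 = fact n * (cmod (f $ n))^2" for n
    by (simp add: Tv_def norm_mult power_mult_distrib)
  then show ?thesis unfolding sq_norm_f_def by simp
qed

lemma inner_T: "inner_f (Tv f) (Tv g) = (\<Sum>n. complex_of_real (fact n) * (cnj (f $ n) * g $ n))"
proof -
  have "cnj (Tv f n) * Tv g n = complex_of_real (fact n) * (cnj (f $ n) * g $ n)" for n
  proof -
    have "cnj (Tv f n) * Tv g n = (complex_of_real (sqrt (fact n)) * complex_of_real (sqrt (fact n))) * (cnj (f $ n) * g $ n)"
      by (simp add: Tv_def mult_ac)
    also have "complex_of_real (sqrt (fact n)) * complex_of_real (sqrt (fact n)) = complex_of_real (fact n)"
      by (simp flip: of_real_mult)
    finally show ?thesis .
  qed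
  then show ?thesis unfolding inner_f_def by simp
qed

lemma summ_bound:
  assumes "mb f a K" "mb g b K"
  shows "summable (\<lambda>n. fact n * (cmod (f $ n) * cmod (g $ n)))"
        "(\<Sum>n. fact n * (cmod (f $ n) * cmod (g $ n))) \<le> a * b * exp (K^2)"
proof -
  have a0: "0 \<le> a" using assms(1) by (rule mb_nonneg)
  have le: "fact n * (cmod (f $ n) * cmod (g $ n)) \<le> a * b * ((K^2)^n / fact n)" for n
  proof -
    have "cmod (f $ n) * cmod (g $ n) \<le> (a * K ^ n / fact n) * (b * K ^ n / fact n)"
    proof (rule mult_mono)
      show "0 \<le> a * K ^ n / fact n" using assms(1) unfolding mb_def by (meson norm_ge_zero order.trans)
    qed (use assms in \<open>auto simp: mb_def\<close>)
    then have "fact n * (cmod (f $ n) * cmod (g $ n)) \<le> fact n * ((a * K ^ n / fact n) * (b * K ^ n / fact n))"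
      by (intro mult_left_mono) auto
    also have "\<dots> = a * b * ((K^2)^n / fact n)"
      by (simp add: field_simps power_mult_distrib power_mult[symmetric] power2_eq_square mult.commute[of 2] power_add[symmetric] mult_2)
    finally show ?thesis .
  qed
  have ex: "(\<lambda>n. (K^2)^n / fact n) sums exp (K^2)"
    using exp_converges[of "K^2"] by (simp add: divide_inverse mult.commute)
  have sg: "summable (\<lambda>n. a * b * ((K^2)^n / fact n))"
    using ex by (intro summable_mult sums_summable) auto
  show s: "summable (\<lambda>n. fact n * (cmod (f $ n) * cmod (g $ n)))"
    by (rule summable_comparison_test'[OF sg]) (use le in auto)
  have "(\<Sum>n. fact n * (cmod (f $ n) * cmod (g $ n))) \<le> (\<Sum>n. a * b * ((K^2)^n / fact n))"
    by (rule suminf_le[OF le s sg])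
  also have "\<dots> = a * b * exp (K^2)" by (rule sums_unique[symmetric]) (rule sums_mult[OF ex])
  finally show "(\<Sum>n. fact n * (cmod (f $ n) * cmod (g $ n))) \<le> a * b * exp (K^2)" .
qed

lemma Tv_exp: "Tv (fps_exp \<gamma>) n = complex_of_real (exp ((cmod \<gamma>)^2 / 2)) * coh \<gamma> n"
proof -
  have "coh \<gamma> n = complex_of_real (exp (- ((cmod \<gamma>)^2) / 2)) * Tv (fps_exp \<gamma>) n"
    by (subst coh_T) (simp add: Tv_const)
  moreover have "complex_of_real (exp ((cmod \<gamma>)^2 / 2)) * complex_of_real (exp (- ((cmod \<gamma>)^2) / 2)) = 1"
    by (simp flip: of_real_mult exp_add)
  ultimately show ?thesis by (simp add: mult.assoc[symmetric])
qed

lemma reindex_sum: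
  fixes k s :: nat
  assumes "0 < s"
  shows "(\<Sum>i<k. \<Sum>j<s. f i j) = (\<Sum>l<k * s. f (l div s) (l mod s))"
proof (induction k)
  case 0 then show ?case by simp
next
  case (Suc k)
  define g where "g l = f (l div s) (l mod s)" for l
  have "sum g {..<Suc k * s} = sum g {..<k * s} + sum g {k * s..<k * s + s}"
    by (simp add: sum.atLeastLessThan_concat[symmetric] lessThan_atLeast0 add.commute)
  also have "sum g {k * s..<k * s + s} = (\<Sum>j<s. f k j)"
  proof -
    have "sum g {0 + k * s..<s + k * s} = sum (\<lambda>j. g (j + k * s)) {0..<s}"
      by (rule sum.shift_bounds_nat_ivl)
    also have "\<dots> = (\<Sum>j\<in>{0..<s}. f k j)"
      using assms unfolding g_def by (intro sum.cong refl) auto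
    finally show ?thesis by (simp add: lessThan_atLeast0 add.commute)
  qed
  finally show ?case using Suc unfolding g_def by simp
qed

lemma rank_repr:
  "\<exists>c \<gamma>. Tv ((\<Sum>j\<le>r. fps_const (d j) * fps_exp (of_nat j * \<epsilon>)) * (\<Sum>i<k. fps_const (a i) * fps_exp (\<beta> i)))
      = (\<lambda>n. \<Sum>l<k * (r + 1). c l * coh (\<gamma> l) n)"
proof -
  define g where "g i j = fps_const (a i * d j) * fps_exp (\<beta> i + of_nat j * \<epsilon>)" for i j
  define cc where "cc i j = a i * d j * complex_of_real (exp ((cmod (\<beta> i + of_nat j * \<epsilon>))^2 / 2))" for i j
  have "(\<Sum>j\<le>r. fps_const (d j) * fps_exp (of_nat j * \<epsilon>)) * (\<Sum>i<k. fps_const (a i) * fps_exp (\<beta> i))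
        = (\<Sum>j\<le>r. \<Sum>i<k. (fps_const (d j) * fps_exp (of_nat j * \<epsilon>)) * (fps_const (a i) * fps_exp (\<beta> i)))"
    by (rule sum_product)
  also have "\<dots> = (\<Sum>i<k. \<Sum>j\<le>r. (fps_const (d j) * fps_exp (of_nat j * \<epsilon>)) * (fps_const (a i) * fps_exp (\<beta> i)))"
    by (rule sum.swap)
  also have "\<dots> = (\<Sum>i<k. \<Sum>j<r+1. g i j)"
    unfolding g_def lessThan_Suc_atMost[symmetric] Suc_eq_plus1[symmetric]
    by (intro sum.cong refl) (simp add: fps_exp_add_mult mult_ac)
  finally have eqn: "(\<Sum>j\<le>r. fps_const (d j) * fps_exp (of_nat j * \<epsilon>)) * (\<Sum>i<k. fps_const (a i) * fps_exp (\<beta> i))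
        = (\<Sum>i<k. \<Sum>j<r+1. g i j)" .
  have "Tv ((\<Sum>j\<le>r. fps_const (d j) * fps_exp (of_nat j * \<epsilon>)) * (\<Sum>i<k. fps_const (a i) * fps_exp (\<beta> i)))
      = (\<lambda>n. \<Sum>i<k. \<Sum>j<r+1. cc i j * coh (\<beta> i + of_nat j * \<epsilon>) n)"
    unfolding eqn Tv_sum g_def Tv_const Tv_exp cc_def
    by (intro ext sum.cong refl) (simp add: mult_ac)
  also have "\<dots> = (\<lambda>n. \<Sum>l<k * (r + 1). cc (l div (r+1)) (l mod (r+1)) * coh (\<beta> (l div (r+1)) + of_nat (l mod (r+1)) * \<epsilon>) n)"
    by (rule ext, rule reindex_sum) simp
  finally show ?thesis
    by (intro exI[of _ "\<lambda>l. cc (l div (r+1)) (l mod (r+1))"] exI[of _ "\<lambda>l. \<beta> (l div (r+1)) + of_nat (l mod (r+1)) * \<epsilon>"])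
qed



lemma Tv_cnj_mult: "cnj (Tv f n) * Tv g n = complex_of_real (fact n) * (cnj (f $ n) * g $ n)"
proof -
  have "cnj (Tv f n) * Tv g n = (complex_of_real (sqrt (fact n)) * complex_of_real (sqrt (fact n))) * (cnj (f $ n) * g $ n)"
    by (simp add: Tv_def mult_ac)
  also have "complex_of_real (sqrt (fact n)) * complex_of_real (sqrt (fact n)) = complex_of_real (fact n)"
    by (simp flip: of_real_mult)
  finally show ?thesis .
qed

lemma Tv_sq: "(cmod (Tv f n))^2 = fact n * (cmod (f $ n))^2"
  by (simp add: Tv_def norm_mult power_mult_distrib)

lemma normalize_sq:
  assumes "summable (\<lambda>n. (cmod (v n))^2)" "sq_norm_f v > 0"
  shows "sq_norm_f (normalize_f v) = 1"
proof -
  have "(cmod (normalize_f v n))^2 = (cmod (v n))^2 / sq_norm_f v" for n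
    using assms(2) by (simp add: normalize_f_def norm_divide power_divide)
  then have "sq_norm_f (normalize_f v) = (\<Sum>n. (cmod (v n))^2 / sq_norm_f v)"
    unfolding sq_norm_f_def[of "normalize_f v"] by simp
  also have "\<dots> = sq_norm_f v / sq_norm_f v"
    using assms(1) unfolding sq_norm_f_def by (rule suminf_divide)
  finally show ?thesis using assms(2) by simp
qed

lemma inner_normalize:
  assumes "summable (\<lambda>n. cnj (u n) * v n)"
  shows "inner_f (normalize_f u) (normalize_f v) =
         inner_f u v / (complex_of_real (sqrt (sq_norm_f u)) * complex_of_real (sqrt (sq_norm_f v)))"
proof -
  have "cnj (normalize_f u n) * normalize_f v n = cnj (u n) * v n / (complex_of_real (sqrt (sq_norm_f u)) * complex_of_real (sqrt (sq_norm_f v)))" for n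
    by (simp add: normalize_f_def)
  then show ?thesis
    unfolding inner_f_def using suminf_divide[OF assms] by simp
qed

lemma suminf_pos_nz:
  assumes "summable (\<lambda>n. fact n * (cmod (f $ n))^2)" "f \<noteq> 0"
  shows "(\<Sum>n. fact n * (cmod (f $ n))^2) > 0"
proof -
  obtain n0 where "f $ n0 \<noteq> 0" using assms(2) fps_nonzero_nth by blast
  then have "fact n0 * (cmod (f $ n0))^2 > 0" by simp
  then show ?thesis by (intro suminf_pos2[OF assms(1)]) auto
qed

lemma summ_sq:
  assumes "mb f a K"
  shows "summable (\<lambda>n. fact n * (cmod (f $ n))^2)"
  using summ_bound(1)[OF assms assms] by (simp add: power2_eq_square)

lemma choose_e:
  fixes N A1 A2 \<delta> :: real
  assumes "N > 0" "\<delta> > 0"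
  obtains e where "0 < e" "e \<le> 1" "N - e * A1 > 0"
    "(N - e * A1)^2 > (1 - \<delta>) * N * (N + 2 * e * A1 + e^2 * A2)"
proof -
  have l1: "((\<lambda>e. (N - e * A1)^2 - (1 - \<delta>) * N * (N + 2 * e * A1 + e^2 * A2)) \<longlongrightarrow>
      (N - 0 * A1)^2 - (1 - \<delta>) * N * (N + 2 * 0 * A1 + 0^2 * A2)) (at_right 0)"
    by (intro tendsto_intros)
  have v1: "(N - 0 * A1)^2 - (1 - \<delta>) * N * (N + 2 * 0 * A1 + 0^2 * A2) = \<delta> * N^2"
    by (simp add: power2_eq_square algebra_simps)
  have "\<delta> * N^2 > 0" using assms by simp
  then have ev1: "eventually (\<lambda>e. (N - e * A1)^2 - (1 - \<delta>) * N * (N + 2 * e * A1 + e^2 * A2) > 0) (at_right 0)"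
    by (rule order_tendstoD(1)[OF l1[unfolded v1]])
  have "((\<lambda>e. N - e * A1) \<longlongrightarrow> N - 0 * A1) (at_right 0)"
    by (intro tendsto_intros)
  then have l2: "((\<lambda>e. N - e * A1) \<longlongrightarrow> N) (at_right 0)" by simp
  have ev2: "eventually (\<lambda>e. N - e * A1 > 0) (at_right 0)"
    by (rule order_tendstoD(1)[OF l2 assms(1)])
  obtain b where b: "b > 0" "\<And>y. y > 0 \<Longrightarrow> y < b \<Longrightarrow> (N - y * A1)^2 - (1 - \<delta>) * N * (N + 2 * y * A1 + y^2 * A2) > 0 \<and> N - y * A1 > 0"
    using eventually_conj[OF ev1 ev2] unfolding eventually_at_right_field by auto
  define e where "e = min (b / 2) (1 / 2)"
  have "0 < e" "e < b" "e \<le> 1" using b(1) by (auto simp: e_def)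
  with b(2)[of e] show ?thesis using that by auto
qed

lemma approx_main:
  fixes Q :: "complex poly" and a \<beta> :: "nat \<Rightarrow> complex" and k r :: nat and S :: "complex fps"
  assumes S_def: "S = (\<Sum>i<k. fps_const (a i) * fps_exp (\<beta> i))"
    and dQ: "degree Q \<le> r" and nz: "fps_of_poly Q * S \<noteq> 0"
  shows "approx_coherent_rank_le (k * (r + 1)) (normalize_f (Tv (fps_of_poly Q * S)))"
  unfolding approx_coherent_rank_le_def
proof (intro allI impI)
  fix \<delta> :: real assume \<delta>: "\<delta> > 0"
  define U where "U = fps_of_poly Q * S"
  define Cq where "Cq = (\<Sum>m\<le>r. cmod (coeff Q m))"
  define Cs where "Cs = (\<Sum>i<k. cmod (a i) * 1)"
  define M where "M = (\<Sum>i<k. cmod (\<beta> i))"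
  define K where "K = real r + 1 + M"
  have mbS: "mb S Cs M" unfolding S_def Cs_def M_def by (rule mb_S)
  have mbU: "mb U (Cq * Cs) K"
    unfolding U_def K_def Cq_def using mb_mult[OF mb_poly[OF dQ] mbS] by simp
  define Cu where "Cu = Cq * Cs"
  define Cd where "Cd = real r * Cq * Cs"
  define A1 where "A1 = Cu * Cd * exp (K^2)"
  define A2 where "A2 = Cd * Cd * exp (K^2)"
  define N where "N = (\<Sum>n. fact n * (cmod (U $ n))^2)"
  have sN: "summable (\<lambda>n. fact n * (cmod (U $ n))^2)" by (rule summ_sq[OF mbU])
  have Npos: "N > 0" unfolding N_def using suminf_pos_nz[OF sN] nz unfolding U_def by simp
  obtain e where e: "0 < e" "e \<le> 1" "N - e * A1 > 0"
    "(N - e * A1)^2 > (1 - \<delta>) * N * (N + 2 * e * A1 + e^2 * A2)"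
    using choose_e[OF Npos \<delta>] by blast
  define \<Phi> where "\<Phi> = Pf e Q r * S"
  define D where "D = U - \<Phi>"
  have "U - \<Phi> = (fps_of_poly Q - Pf e Q r) * S" unfolding U_def \<Phi>_def by (simp add: algebra_simps)
  then have mbD: "mb D (e * Cd) K"
    unfolding D_def K_def Cd_def Cq_def using mb_mult[OF mb_polydiff[OF e(1,2) dQ] mbS] by (simp add: mult_ac)
  have mbP: "mb \<Phi> (Cu + e * Cd) K"
  proof -
    have "\<Phi> = U - D" unfolding D_def by simp
    then show ?thesis using mb_diff[OF mbU mbD] unfolding Cu_def by simp
  qed
  have sUD: "summable (\<lambda>n. fact n * (cmod (U $ n) * cmod (D $ n)))"
    and bUD: "(\<Sum>n. fact n * (cmod (U $ n) * cmod (D $ n))) \<le> e * A1"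
    using summ_bound[OF mbU mbD] unfolding A1_def Cu_def by (auto simp: mult_ac)
  have sDD: "summable (\<lambda>n. fact n * (cmod (D $ n))^2)"
    and bDD: "(\<Sum>n. fact n * (cmod (D $ n))^2) \<le> e^2 * A2"
    using summ_bound[OF mbD mbD] unfolding A2_def by (auto simp: mult_ac power2_eq_square)
  have sPP: "summable (\<lambda>n. fact n * (cmod (\<Phi> $ n))^2)" by (rule summ_sq[OF mbP])
  have sUP: "summable (\<lambda>n. fact n * (cmod (U $ n) * cmod (\<Phi> $ n)))" by (rule summ_bound(1)[OF mbU mbP])
  define I where "I = (\<Sum>n. complex_of_real (fact n) * (cnj (U $ n) * \<Phi> $ n))"
  define J where "J = (\<Sum>n. complex_of_real (fact n) * (cnj (U $ n) * D $ n))"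
  have sJn: "summable (\<lambda>n. norm (complex_of_real (fact n) * (cnj (U $ n) * D $ n)))"
    using sUD by (simp add: norm_mult)
  have sJ: "summable (\<lambda>n. complex_of_real (fact n) * (cnj (U $ n) * D $ n))"
    by (rule summable_norm_cancel[OF sJn])
  have Jb: "cmod J \<le> e * A1"
  proof -
    have "cmod J \<le> (\<Sum>n. norm (complex_of_real (fact n) * (cnj (U $ n) * D $ n)))"
      unfolding J_def by (rule summable_norm[OF sJn])
    also have "\<dots> = (\<Sum>n. fact n * (cmod (U $ n) * cmod (D $ n)))" by (simp add: norm_mult)
    finally show ?thesis using bUD by simp
  qed
  have IJ: "I = complex_of_real N - J"
  proof -
    have t: "complex_of_real (fact n) * (cnj (U $ n) * \<Phi> $ n) =
          complex_of_real (fact n * (cmod (U $ n))^2) - complex_of_real (fact n) * (cnj (U $ n) * D $ n)" for n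
    proof -
      have e1: "\<Phi> $ n = U $ n - D $ n" unfolding D_def by simp
      have e2: "cnj (U $ n) * U $ n = complex_of_real ((cmod (U $ n))^2)"
        by (subst complex_norm_square) (rule mult.commute)
      show ?thesis unfolding e1 right_diff_distrib e2 of_real_mult ..
    qed
    have s1: "(\<lambda>n. complex_of_real (fact n * (cmod (U $ n))^2)) sums complex_of_real N"
      unfolding N_def by (rule sums_of_real[OF summable_sums[OF sN]])
    have "(\<lambda>n. complex_of_real (fact n) * (cnj (U $ n) * \<Phi> $ n)) sums (complex_of_real N - J)"
      unfolding t J_def by (intro sums_diff s1 summable_sums[OF sJ])
    then show ?thesis unfolding I_def by (simp add: sums_iff)
  qed
  have Ilow: "cmod I \<ge> N - e * A1"
  proof -
    have "cmod (complex_of_real N) \<le> cmod I + cmod J" using IJ by (metis add_diff_cancel_right' norm_triangle_ineq diff_add_cancel)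
    then show ?thesis using Jb Npos by simp
  qed
  define NP where "NP = (\<Sum>n. fact n * (cmod (\<Phi> $ n))^2)"
  have NPb: "NP \<le> N + 2 * (e * A1) + e^2 * A2"
  proof -
    have le: "fact n * (cmod (\<Phi> $ n))^2 \<le> fact n * (cmod (U $ n))^2 + 2 * (fact n * (cmod (U $ n) * cmod (D $ n))) + fact n * (cmod (D $ n))^2" for n
    proof -
      have "cmod (\<Phi> $ n) \<le> cmod (U $ n) + cmod (D $ n)"
        unfolding D_def using norm_triangle_ineq4[of "U $ n" "(U - \<Phi>) $ n"] by simp
      then have "(cmod (\<Phi> $ n))^2 \<le> (cmod (U $ n) + cmod (D $ n))^2" by (intro power_mono) auto
      then have "fact n * (cmod (\<Phi> $ n))^2 \<le> fact n * (cmod (U $ n) + cmod (D $ n))^2" by (intro mult_left_mono) auto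
      then show ?thesis by (simp add: power2_eq_square algebra_simps)
    qed
    have sR: "summable (\<lambda>n. fact n * (cmod (U $ n))^2 + 2 * (fact n * (cmod (U $ n) * cmod (D $ n))) + fact n * (cmod (D $ n))^2)"
      by (intro summable_add summable_mult sN sUD sDD)
    have "NP \<le> (\<Sum>n. fact n * (cmod (U $ n))^2 + 2 * (fact n * (cmod (U $ n) * cmod (D $ n))) + fact n * (cmod (D $ n))^2)"
      unfolding NP_def by (rule suminf_le[OF le sPP sR])
    also have "\<dots> = N + 2 * (\<Sum>n. fact n * (cmod (U $ n) * cmod (D $ n))) + (\<Sum>n. fact n * (cmod (D $ n))^2)"
      unfolding N_def using sN sUD sDD
      by (simp add: suminf_add[symmetric] summable_add summable_mult suminf_mult)
    finally show ?thesis using bUD bDD by linarith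
  qed
  have Ipos: "cmod I > 0" using Ilow e(3) by linarith
  have Pnz: "\<Phi> \<noteq> 0"
  proof
    assume "\<Phi> = 0"
    then have "I = 0" unfolding I_def by simp
    then show False using Ipos by simp
  qed
  have NPpos: "NP > 0" unfolding NP_def by (rule suminf_pos_nz[OF sPP Pnz])
  have main_ineq: "(cmod I)^2 > (1 - \<delta>) * N * NP"
  proof (cases "1 - \<delta> \<ge> 0")
    case True
    have "(1 - \<delta>) * N * NP \<le> (1 - \<delta>) * N * (N + 2 * e * A1 + e^2 * A2)"
      using True Npos NPb by (intro mult_left_mono) (auto simp: mult_ac)
    also have "\<dots> < (N - e * A1)^2" by (rule e(4))
    also have "\<dots> \<le> (cmod I)^2" using Ilow e(3) by (intro power_mono) auto
    finally show ?thesis .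
  next
    case False
    then have "(1 - \<delta>) * N * NP \<le> 0" using Npos NPpos
      by (metis less_eq_real_def mult_nonneg_nonneg mult_nonpos_nonneg not_le)
    also have "0 < (cmod I)^2" using Ipos by simp
    finally show ?thesis .
  qed
  have sqU: "sq_norm_f (Tv U) = N" unfolding N_def sqn_T ..
  have sqP: "sq_norm_f (Tv \<Phi>) = NP" unfolding NP_def sqn_T ..
  have inn: "inner_f (Tv U) (Tv \<Phi>) = I" unfolding I_def inner_T ..
  have sInn: "summable (\<lambda>n. cnj (Tv U n) * Tv \<Phi> n)"
    unfolding Tv_cnj_mult by (rule summable_norm_cancel) (use sUP in \<open>simp add: norm_mult\<close>)
  define \<phi> where "\<phi> = normalize_f (Tv \<Phi>)"
  have "cmod (inner_f (normalize_f (Tv U)) \<phi>) ^ 2 = (cmod I)^2 / (N * NP)"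
    unfolding \<phi>_def inner_normalize[OF sInn] inn sqU sqP using Npos NPpos
    by (simp add: norm_divide norm_mult power_divide power_mult_distrib)
  also have "\<dots> > 1 - \<delta>"
    using main_ineq Npos NPpos by (simp add: pos_less_divide_eq mult_ac)
  finally have c1: "1 - \<delta> < cmod (inner_f (normalize_f (Tv U)) \<phi>) ^ 2" .
  have c2: "sq_norm_f \<phi> = 1"
    unfolding \<phi>_def by (rule normalize_sq) (use sPP NPpos sqP in \<open>simp_all add: Tv_sq\<close>)
  have c3: "coherent_rank_le (k * (r + 1)) \<phi>"
  proof -
    have "e \<noteq> 0" using e(1) by simp
    from Pf_repr[OF this, of Q r] obtain d where
      d: "Pf e Q r = (\<Sum>j\<le>r. fps_const (d j) * fps_exp (of_nat j * complex_of_real e))" by blast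
    from rank_repr[where d=d and r=r and \<epsilon>="complex_of_real e" and k=k and a=a and \<beta>=\<beta>] obtain c \<gamma> where
      cg: "Tv \<Phi> = (\<lambda>n. \<Sum>l<k * (r + 1). c l * coh (\<gamma> l) n)"
      unfolding \<Phi>_def d S_def by blast
    define z where "z = complex_of_real (sqrt (sq_norm_f (Tv \<Phi>)))"
    have "\<phi> = (\<lambda>n. Tv \<Phi> n / z)" unfolding \<phi>_def normalize_f_def z_def ..
    also have "\<dots> = (\<lambda>n. \<Sum>l<k * (r + 1). (c l / z) * coh (\<gamma> l) n)"
      unfolding cg by (simp add: sum_divide_distrib)
    finally have "\<phi> = (\<lambda>n. \<Sum>l<k * (r + 1). (c l / z) * coh (\<gamma> l) n)" .
    then show ?thesis unfolding coherent_rank_le_def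
      by (intro exI[of _ "\<lambda>l. c l / z"] exI[of _ \<gamma>])
  qed
  show "\<exists>\<phi>. coherent_rank_le (k * (r + 1)) \<phi> \<and> sq_norm_f \<phi> = 1 \<and>
          1 - \<delta> < (cmod (inner_f (normalize_f (Tv (fps_of_poly Q * S))) \<phi>))\<^sup>2"
    using c1 c2 c3 unfolding U_def by blast
qed

theorem proposition1:
  fixes bs :: "complex list" and z \<alpha> :: complex and k :: nat
  assumes "coherent_rank_le k (squeeze z (coh \<alpha>))"
  shows "approx_coherent_rank_le (k * (length bs + 1))
           (normalize_f (foldr dad bs (squeeze z (coh \<alpha>))))"
proof -
  obtain c \<alpha>' where G: "squeeze z (coh \<alpha>) = (\<lambda>n. \<Sum>i<k. c i * coh (\<alpha>' i) n)"
    using assms unfolding coherent_rank_le_def by blast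
  define a where "a i = c i * complex_of_real (exp (- ((cmod (\<alpha>' i))^2) / 2))" for i
  define S where "S = (\<Sum>i<k. fps_const (a i) * fps_exp (\<alpha>' i))"
  have GS: "squeeze z (coh \<alpha>) = Tv S"
    unfolding G S_def Tv_sum Tv_const a_def
    by (intro ext sum.cong refl) (simp add: coh_T Tv_const mult.assoc)
  have Snz: "S \<noteq> 0"
  proof
    assume "S = 0"
    then have "squeeze z (coh \<alpha>) 0 = 0" unfolding GS by (simp add: Tv_def)
    then show False using squeeze_nz by blast
  qed
  have Qnz: "fps_of_poly (Qbs bs) \<noteq> 0"
    using Qbs_nz[of bs] fps_of_poly_eq_iff[of "Qbs bs" 0] by simp
  have nz: "fps_of_poly (Qbs bs) * S \<noteq> 0" using Qnz Snz by simp
  have "foldr dad bs (squeeze z (coh \<alpha>)) = Tv (fps_of_poly (Qbs bs) * S)"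
    unfolding GS S_def by (rule foldr_dad)
  then show ?thesis
    using approx_main[OF S_def Qbs_degree nz] by simp
qed

end
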